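(* Let $\kappa<0$ and $\mu<0$, and set $\sigma=\sqrt{\mu/\kappa}>0$. Fix a real constant $K_0$ and a choice of signs (the same choice in each formula below). For $\tau>0$ define \[ \tilde q_0(x)=\sigma\tanh\!\Big(\pm\sigma\sqrt{\tfrac{\kappa(\mu\tau-1)}{2}}\,x\pm K_0\Big),\qquad \tilde q_1(x)=\frac{1}{1-\mu\tau}\,\tilde q_0'(x), \] which give standing front solutions $e^{i\mu t}(\tilde q_0(x),\tilde q_1(x))$ of the NLSH system $i\partial_tq_0+\partial_xq_1=-\kappa|q_0|^2q_0$, $i\tau\partial_tq_1=\partial_xq_0-q_1$, and let \[ u^-(x)=\sigma\tanh\!\Big(\pm\sigma\sqrt{-\kappa/2}\,x\pm K_0\Big) \] (the amplitude of the dark-soliton ground state $e^{i\mu t}u^-(x)$ of the NLS equation $iu_t+u_{xx}+\kappa|u|^2u=0$). Then as $\tau\to0$, the family $\{\tilde q_0\}_{\tau>0}$ converges uniformly on $\mathbb{R}$ to $u^-$ at a rate linear in $\tau$, i.e. $\sup_{x\in\mathbb{R}}|\tilde q_0(x)-u^-(x)|=O(\tau)$, and $\{\tilde q_1\}_{\tau>0}$ converges uniformly on $\mathbb{R}$ to $(u^-)'$ at a rate linear in $\tau$.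
   Context: Standing-wave ansatz: $(q_0,q_1)(x,t)=e^{i\mu t}(\tilde q_0(x),\tilde q_1(x))$ with $\mu\in\mathbb{R}$, which reduces NLSH to $\tilde q_0'=(1-\mu\tau)\tilde q_1$, $\tilde q_1'=(\mu-\kappa\tilde q_0^2)\tilde q_0$. *)

theory Defs
  imports "HOL-Analysis.Analysis"
begin

definition sigma_nlsh :: "real \<Rightarrow> real \<Rightarrow> real" where
  "sigma_nlsh \<kappa> \<mu> = sqrt (\<mu> / \<kappa>)"

text \<open>Standing front amplitude q0~ of NLSH; s1, s2 in {1,-1} encode the sign choices.\<close>
definition q0_front :: "real \<Rightarrow> real \<Rightarrow> real \<Rightarrow> real \<Rightarrow> real \<Rightarrow> real \<Rightarrow> real \<Rightarrow> real" where
  "q0_front \<kappa> \<mu> K0 s1 s2 \<tau> x =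
     sigma_nlsh \<kappa> \<mu> * tanh (s1 * sigma_nlsh \<kappa> \<mu> * sqrt (\<kappa> * (\<mu> * \<tau> - 1) / 2) * x + s2 * K0)"

definition q1_front :: "real \<Rightarrow> real \<Rightarrow> real \<Rightarrow> real \<Rightarrow> real \<Rightarrow> real \<Rightarrow> real \<Rightarrow> real" where
  "q1_front \<kappa> \<mu> K0 s1 s2 \<tau> x = deriv (q0_front \<kappa> \<mu> K0 s1 s2 \<tau>) x / (1 - \<mu> * \<tau>)"

definition u_dark :: "real \<Rightarrow> real \<Rightarrow> real \<Rightarrow> real \<Rightarrow> real \<Rightarrow> real \<Rightarrow> real" where
  "u_dark \<kappa> \<mu> K0 s1 s2 x =
     sigma_nlsh \<kappa> \<mu> * tanh (s1 * sigma_nlsh \<kappa> \<mu> * sqrt (- \<kappa> / 2) * x + s2 * K0)"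

end

theory Submission imports Defs begin

lemma cosh_lb: "cosh (z::real) \<ge> (1 + \<bar>z\<bar>) / 2"
proof -
  have "cosh z = cosh \<bar>z\<bar>" by simp
  also have "\<dots> = (exp \<bar>z\<bar> + exp (- \<bar>z\<bar>)) / 2" by (simp add: cosh_def)
  also have "\<dots> \<ge> (1 + \<bar>z\<bar>) / 2"
  proof -
    have "1 + \<bar>z\<bar> \<le> exp \<bar>z\<bar>" by (rule exp_ge_add_one_self)
    moreover have "0 < exp (- \<bar>z\<bar>)" by simp
    ultimately have "1 + \<bar>z\<bar> \<le> exp \<bar>z\<bar> + exp (- \<bar>z\<bar>)" by linarith
    thus ?thesis by (intro divide_right_mono) auto
  qed
  finally show ?thesis .
qed

lemma sech2: "1 - tanh (z::real) ^ 2 = 1 / cosh z ^ 2"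
proof -
  have "cosh z ^ 2 \<noteq> 0" by simp
  hence "1 - tanh z ^ 2 = (cosh z ^ 2 - sinh z ^ 2) / cosh z ^ 2"
    by (simp add: tanh_def power_divide diff_divide_distrib)
  thus ?thesis by (simp add: hyperbolic_pythagoras)
qed

lemma z_sech2: "\<bar>z\<bar> * (1 - tanh (z::real) ^ 2) \<le> 1"
proof -
  have c: "cosh z ^ 2 \<ge> ((1 + \<bar>z\<bar>) / 2)^2"
    using cosh_lb[of z] by (intro power_mono) auto
  have "((1 + \<bar>z\<bar>) / 2)^2 \<ge> \<bar>z\<bar>"
    using sum_squares_ge_zero[of "\<bar>z\<bar> - 1" 0] by (simp add: power2_eq_square field_simps)
  hence "\<bar>z\<bar> \<le> cosh z ^ 2" using c by linarith
  thus ?thesis unfolding sech2 by (simp add: field_simps)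
qed

lemma sech2_bounds: "0 \<le> 1 - tanh (z::real) ^ 2" "1 - tanh z ^ 2 \<le> 1"
proof -
  have "\<bar>tanh z\<bar> \<le> 1" using tanh_real_bounds[of z] by auto
  hence "tanh z ^ 2 \<le> 1" by (simp add: abs_square_le_1)
  thus "0 \<le> 1 - tanh (z::real) ^ 2" by simp
  show "1 - tanh z ^ 2 \<le> 1" by simp
qed

lemma key:
  fixes y k l :: real
  assumes "l \<ge> 1"
  shows "\<bar>tanh (l * y + k) - tanh (y + k)\<bar> \<le> (1 + \<bar>k\<bar>) * (l - 1)"
proof (cases "l = 1")
  case True then show ?thesis by simp
next
  case False
  hence l1: "1 < l" using assms by simp
  have d: "\<forall>t. 1 \<le> t \<and> t \<le> l \<longrightarrow> ((\<lambda>t. tanh (t * y + k)) has_real_derivative (1 - tanh (t*y+k)^2) * y) (at t)"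
    by (auto intro!: derivative_eq_intros)
  obtain xi where xi: "1 < xi" "xi < l" "tanh (l*y+k) - tanh (1*y+k) = (l - 1) * ((1 - tanh (xi*y+k)^2) * y)"
    using MVT2[OF l1, of "\<lambda>t. tanh (t * y + k)" "\<lambda>t. (1 - tanh (t*y+k)^2) * y"] d by blast
  define z where "z = xi*y+k"
  have yb: "\<bar>y\<bar> \<le> \<bar>z\<bar> + \<bar>k\<bar>"
  proof -
    have "\<bar>y\<bar> \<le> xi * \<bar>y\<bar>" using xi by (simp add: mult_le_cancel_right1)
    also have "\<dots> = \<bar>z - k\<bar>" using xi by (simp add: z_def abs_mult)
    finally show ?thesis by linarith
  qed
  have "\<bar>(1 - tanh z^2) * y\<bar> = (1 - tanh z^2) * \<bar>y\<bar>" using sech2_bounds[of z] by (simp add: abs_mult)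
  also have "\<dots> \<le> (1 - tanh z^2) * (\<bar>z\<bar> + \<bar>k\<bar>)" using yb sech2_bounds[of z] by (intro mult_left_mono) auto
  also have "\<dots> = \<bar>z\<bar> * (1 - tanh z^2) + (1 - tanh z^2) * \<bar>k\<bar>" by (simp add: algebra_simps)
  also have "\<dots> \<le> 1 + \<bar>k\<bar>" using z_sech2[of z] sech2_bounds[of z]
    by (smt (verit) abs_ge_zero mult_left_le_one_le)
  finally have b: "\<bar>(1 - tanh z^2) * y\<bar> \<le> 1 + \<bar>k\<bar>" .
  have "\<bar>tanh (l * y + k) - tanh (y + k)\<bar> = (l - 1) * \<bar>(1 - tanh z^2) * y\<bar>"
    using xi l1 by (simp add: z_def abs_mult)
  also have "\<dots> \<le> (l - 1) * (1 + \<bar>k\<bar>)" using l1 b by (intro mult_left_mono) auto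
  finally show ?thesis by (simp add: mult.commute)
qed

lemma alg_bound:
  fixes T0 T1 l :: real
  assumes "\<bar>T0\<bar> \<le> 1" "\<bar>T1\<bar> \<le> 1" "l \<ge> 1"
  shows "\<bar>(1 - T1^2) / l - (1 - T0^2)\<bar> \<le> 2 * \<bar>T1 - T0\<bar> + (l - 1)"
proof -
  have A0: "0 \<le> 1 - T0^2" "1 - T0^2 \<le> 1" using assms(1) abs_square_le_1 by auto
  have lp: "l > 0" using assms(3) by simp
  have e: "(1 - T1^2) / l - (1 - T0^2) = (T0 - T1) * (T0 + T1) / l - (1 - T0^2) * (l - 1) / l"
    using lp by (simp add: field_simps power2_eq_square)
  define P where "P = (T0 - T1) * (T0 + T1)"
  have "\<bar>P\<bar> \<le> \<bar>P\<bar> * l" using mult_left_mono[OF assms(3), of "\<bar>P\<bar>"] by simp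
  hence "\<bar>P / l\<bar> \<le> \<bar>P\<bar>" using lp by (simp add: abs_divide divide_le_eq)
  also have "\<bar>P\<bar> \<le> \<bar>T1 - T0\<bar> * 2"
    unfolding abs_mult P_def using assms(1,2) by (intro mult_mono) (auto simp: abs_minus_commute)
  finally have 1: "\<bar>P / l\<bar> \<le> 2 * \<bar>T1 - T0\<bar>" by simp
  have "(1 - T0^2) * (l - 1) \<le> 1 * (l - 1)" using A0 assms(3) by (intro mult_right_mono) auto
  also have "\<dots> \<le> (l - 1) * l" using mult_left_mono[OF assms(3), of "l - 1"] assms(3) by simp
  finally have "(1 - T0^2) * (l - 1) / l \<le> (l - 1)" using lp by (simp add: divide_le_eq)
  moreover have "0 \<le> (1 - T0^2) * (l - 1) / l" using A0 assms(3) by simp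
  ultimately show ?thesis unfolding e using 1 unfolding P_def by linarith
qed

lemma deriv_tanh_lin:
  fixes a c k :: real
  shows "deriv (\<lambda>x. a * tanh (c * x + k)) x = a * ((1 - tanh (c*x+k)^2) * c)"
  by (rule DERIV_imp_deriv) (auto intro!: derivative_eq_intros)

theorem proposition1:
  fixes \<kappa> \<mu> K0 s1 s2 :: real
  assumes "\<kappa> < 0" and "\<mu> < 0"
    and "s1 \<in> {1, -1}" and "s2 \<in> {1, -1}"
  shows "\<exists>C \<delta>. \<delta> > 0 \<and> (\<forall>\<tau>. 0 < \<tau> \<and> \<tau> < \<delta> \<longrightarrow> (\<forall>x.
            \<bar>q0_front \<kappa> \<mu> K0 s1 s2 \<tau> x - u_dark \<kappa> \<mu> K0 s1 s2 x\<bar> \<le> C * \<tau>)) \<and>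
         (\<exists>C \<delta>. \<delta> > 0 \<and> (\<forall>\<tau>. 0 < \<tau> \<and> \<tau> < \<delta> \<longrightarrow> (\<forall>x.
            \<bar>q1_front \<kappa> \<mu> K0 s1 s2 \<tau> x - deriv (u_dark \<kappa> \<mu> K0 s1 s2) x\<bar> \<le> C * \<tau>)))"
proof -
  define \<sigma> where "\<sigma> = sigma_nlsh \<kappa> \<mu>"
  define b where "b = sqrt (- \<kappa> / 2)"
  define k where "k = s2 * K0"
  have sp: "\<sigma> > 0" unfolding \<sigma>_def sigma_nlsh_def using assms(1,2) by (simp add: divide_neg_neg)
  have bp: "b > 0" unfolding b_def using assms(1) by simp
  have ka: "\<bar>k\<bar> = \<bar>K0\<bar>" using assms(4) unfolding k_def by (auto simp: abs_mult)
  have s1a: "\<bar>s1\<bar> = 1" using assms(3) by auto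
  have main: "\<bar>q0_front \<kappa> \<mu> K0 s1 s2 \<tau> x - u_dark \<kappa> \<mu> K0 s1 s2 x\<bar> \<le> (\<sigma> * (1 + \<bar>K0\<bar>) * (- \<mu>)) * \<tau>
     \<and> \<bar>q1_front \<kappa> \<mu> K0 s1 s2 \<tau> x - deriv (u_dark \<kappa> \<mu> K0 s1 s2) x\<bar> \<le> (\<sigma>^2 * b * (3 + 2 * \<bar>K0\<bar>) * (- \<mu>)) * \<tau>"
    if tp: "\<tau> > 0" for \<tau> x
  proof -
    define l where "l = sqrt (1 - \<mu> * \<tau>)"
    have m1: "1 - \<mu> * \<tau> \<ge> 1" using tp assms(2) using mult_neg_pos[of \<mu> \<tau>] by simp
    have l1: "l \<ge> 1" unfolding l_def using m1 by simp
    have l2: "l^2 = 1 - \<mu> * \<tau>" unfolding l_def using m1 by simp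
    have lm: "l - 1 \<le> - \<mu> * \<tau>"
    proof -
      have "l \<le> l * l" using l1 mult_left_mono[OF l1, of l] by simp
      thus ?thesis using l2 by (simp add: power2_eq_square)
    qed
    have sq: "sqrt (\<kappa> * (\<mu> * \<tau> - 1) / 2) = b * l"
    proof -
      have "\<kappa> * (\<mu> * \<tau> - 1) / 2 = (- \<kappa> / 2) * (1 - \<mu> * \<tau>)" by (simp add: field_simps)
      thus ?thesis unfolding b_def l_def by (metis real_sqrt_mult)
    qed
    define y where "y = s1 * \<sigma> * b * x"
    have q0e: "q0_front \<kappa> \<mu> K0 s1 s2 \<tau> = (\<lambda>x. \<sigma> * tanh ((s1 * \<sigma> * b * l) * x + k))"
      unfolding q0_front_def sq \<sigma>_def k_def by (simp add: mult.assoc)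
    have ue: "u_dark \<kappa> \<mu> K0 s1 s2 = (\<lambda>x. \<sigma> * tanh ((s1 * \<sigma> * b) * x + k))"
      unfolding u_dark_def \<sigma>_def k_def b_def by (simp add: mult.assoc)
    have a1: "(s1 * \<sigma> * b * l) * x + k = l * y + k" unfolding y_def by (simp add: algebra_simps)
    have a0: "(s1 * \<sigma> * b) * x + k = y + k" unfolding y_def by simp
    have K: "\<bar>tanh (l * y + k) - tanh (y + k)\<bar> \<le> (1 + \<bar>K0\<bar>) * (-\<mu> * \<tau>)"
    proof -
      have "\<bar>tanh (l * y + k) - tanh (y + k)\<bar> \<le> (1 + \<bar>k\<bar>) * (l - 1)" by (rule key[OF l1])
      also have "\<dots> \<le> (1 + \<bar>K0\<bar>) * (-\<mu> * \<tau>)" unfolding ka using lm by (intro mult_left_mono) auto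
      finally show ?thesis .
    qed
    have P1: "\<bar>q0_front \<kappa> \<mu> K0 s1 s2 \<tau> x - u_dark \<kappa> \<mu> K0 s1 s2 x\<bar> \<le> (\<sigma> * (1 + \<bar>K0\<bar>) * (- \<mu>)) * \<tau>"
    proof -
      have "\<bar>q0_front \<kappa> \<mu> K0 s1 s2 \<tau> x - u_dark \<kappa> \<mu> K0 s1 s2 x\<bar> = \<sigma> * \<bar>tanh (l * y + k) - tanh (y + k)\<bar>"
        unfolding q0e ue a1 a0 using sp by (simp add: abs_mult right_diff_distrib[symmetric])
      also have "\<dots> \<le> \<sigma> * ((1 + \<bar>K0\<bar>) * (-\<mu> * \<tau>))" using K sp by (intro mult_left_mono) auto
      finally show ?thesis by (simp add: algebra_simps)
    qed
    define T1 where "T1 = tanh (l * y + k)"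
    define T0 where "T0 = tanh (y + k)"
    have T0b: "\<bar>T0\<bar> \<le> 1" "\<bar>T1\<bar> \<le> 1" unfolding T0_def T1_def using tanh_real_bounds by (auto simp: less_imp_le abs_le_iff)
    have q1e: "q1_front \<kappa> \<mu> K0 s1 s2 \<tau> x = \<sigma>^2 * s1 * b * ((1 - T1^2) / l)"
    proof -
      have "q1_front \<kappa> \<mu> K0 s1 s2 \<tau> x = \<sigma> * ((1 - T1^2) * (s1 * \<sigma> * b * l)) / l^2"
        unfolding q1_front_def q0e deriv_tanh_lin a1 T1_def l2 ..
      also have "\<dots> = \<sigma>^2 * s1 * b * ((1 - T1^2) / l)" using l1 by (simp add: field_simps power2_eq_square)
      finally show ?thesis .
    qed
    have ude: "deriv (u_dark \<kappa> \<mu> K0 s1 s2) x = \<sigma>^2 * s1 * b * (1 - T0^2)"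
      unfolding ue deriv_tanh_lin a0 T0_def by (simp add: power2_eq_square algebra_simps)
    have "\<bar>q1_front \<kappa> \<mu> K0 s1 s2 \<tau> x - deriv (u_dark \<kappa> \<mu> K0 s1 s2) x\<bar>
        = \<sigma>^2 * b * \<bar>(1 - T1^2) / l - (1 - T0^2)\<bar>"
    proof -
      have "q1_front \<kappa> \<mu> K0 s1 s2 \<tau> x - deriv (u_dark \<kappa> \<mu> K0 s1 s2) x
          = (\<sigma>^2 * s1 * b) * ((1 - T1^2) / l - (1 - T0^2))"
        unfolding q1e ude by (simp only: right_diff_distrib)
      thus ?thesis using sp bp s1a by (simp add: abs_mult)
    qed
    also have "\<dots> \<le> \<sigma>^2 * b * (2 * \<bar>T1 - T0\<bar> + (l - 1))"
      using alg_bound[OF T0b(1,2) l1] sp bp by (intro mult_left_mono) auto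
    also have "\<dots> \<le> \<sigma>^2 * b * (2 * ((1 + \<bar>K0\<bar>) * (-\<mu> * \<tau>)) + (-\<mu> * \<tau>))"
      using K lm sp bp unfolding T0_def T1_def by (intro mult_left_mono) auto
    also have "\<dots> = (\<sigma>^2 * b * (3 + 2 * \<bar>K0\<bar>) * (- \<mu>)) * \<tau>" by (simp add: algebra_simps)
    finally show ?thesis using P1 by simp
  qed
  show ?thesis
    apply (rule exI[of _ "\<sigma> * (1 + \<bar>K0\<bar>) * (- \<mu>)"], rule exI[of _ 1])
    apply (intro conjI)
      apply simp
    using main apply blast
    apply (rule exI[of _ "\<sigma>^2 * b * (3 + 2 * \<bar>K0\<bar>) * (- \<mu>)"], rule exI[of _ 1])
    using main by auto
qed

end
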